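(* For any $n\in\mathbb{N}$, the monoid $\mathrm{lps}_n$ has finite derivation type.
   Context: Let $\mathcal{A}_n=\{1<2<\cdots<n\}$. An lPS tableau is a finite (possibly empty) sequence of nonempty bottom-justified columns of boxes filled with positive integers, such that the entries of each column are strictly decreasing from top to bottom and the bottom entries of the columns form a weakly increasing sequence from left to right. Right insertion of a symbol $a$ into an lPS tableau $B$: if $a$ is greater than or equal to every entry of the bottom row, append a new column consisting of $a$ at the right end; otherwise, let $z$ be the leftmost bottom-row entry with $z>a$ and put $a$ in a new box at the bottom of the column of $z$ (the previous entries of that column move up one box). For $w=w_1\cdots w_k$, $\mathfrak{R}_\ell(w)$ is obtained by starting with the empty tableau and right-inserting $w_1,\dots,w_k$ in order. The monoid $\mathrm{lps}_n$ is the quotient of $\mathcal{A}_n^*$ by the congruence $u\equiv v\iff\mathfrak{R}_\ell(u)=\mathfrak{R}_\ell(v)$. Finite derivation type is Squier's homotopical finiteness property of finitely presented monoids. *)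

theory Defs
  imports Main
begin

text \<open>An lPS tableau is a list of columns (left to right); each column is a
nonempty list of entries read from bottom to top, so hd c is the bottom entry.\<close>

fun rins :: "nat list list \<Rightarrow> nat \<Rightarrow> nat list list" where
  "rins [] a = [[a]]"
| "rins (c # cs) a = (if a < hd c then (a # c) # cs else c # rins cs a)"

definition Rl :: "nat list \<Rightarrow> nat list list" where
  "Rl w = foldl rins [] w"

definition lps_cong :: "nat \<Rightarrow> nat list \<Rightarrow> nat list \<Rightarrow> bool" where
  "lps_cong n u v = (Rl u = Rl v)"

definition rstep :: "('b list \<times> 'b list) set \<Rightarrow> 'b list \<Rightarrow> 'b list \<Rightarrow> bool" where
  "rstep R x y = (\<exists>u v l r. (l, r) \<in> R \<and> x = u @ l @ v \<and> y = u @ r @ v)"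

definition thue :: "('b list \<times> 'b list) set \<Rightarrow> 'b list \<Rightarrow> 'b list \<Rightarrow> bool" where
  "thue R = (\<lambda>x y. rstep R x y \<or> rstep R y x)\<^sup>*\<^sup>*"

definition hext :: "('b \<Rightarrow> 'c list) \<Rightarrow> 'b list \<Rightarrow> 'c list" where
  "hext f w = concat (map f w)"

text \<open>The monoid presented by (B, R) is isomorphic to the quotient of A* by the
congruence E: there are mutually inverse monoid homomorphisms, given on generators.\<close>
definition presents ::
  "nat set \<Rightarrow> (nat list \<times> nat list) set \<Rightarrow> 'a set \<Rightarrow> ('a list \<Rightarrow> 'a list \<Rightarrow> bool) \<Rightarrow> bool" where
  "presents B R A E = (\<exists>(f :: nat \<Rightarrow> 'a list) (g :: 'a \<Rightarrow> nat list).
      (\<forall>b\<in>B. set (f b) \<subseteq> A) \<and> (\<forall>a\<in>A. set (g a) \<subseteq> B) \<and>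
      (\<forall>u v. set u \<subseteq> B \<longrightarrow> set v \<subseteq> B \<longrightarrow> thue R u v \<longrightarrow> E (hext f u) (hext f v)) \<and>
      (\<forall>u v. set u \<subseteq> A \<longrightarrow> set v \<subseteq> A \<longrightarrow> E u v \<longrightarrow> thue R (hext g u) (hext g v)) \<and>
      (\<forall>w. set w \<subseteq> A \<longrightarrow> E (hext f (hext g w)) w) \<and>
      (\<forall>w. set w \<subseteq> B \<longrightarrow> thue R (hext g (hext f w)) w))"

text \<open>An edge (u, (l, r), b, v) of the derivation graph goes from u l v to u r v
if b, and from u r v to u l v otherwise.\<close>
type_synonym 'b edge = "'b list \<times> ('b list \<times> 'b list) \<times> bool \<times> 'b list"
type_synonym 'b dpath = "'b list \<times> 'b edge list"

fun esrc :: "'b edge \<Rightarrow> 'b list" where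
  "esrc (u, (l, r), b, v) = (if b then u @ l @ v else u @ r @ v)"

fun etgt :: "'b edge \<Rightarrow> 'b list" where
  "etgt (u, (l, r), b, v) = (if b then u @ r @ v else u @ l @ v)"

fun einv :: "'b edge \<Rightarrow> 'b edge" where
  "einv (u, lr, b, v) = (u, lr, \<not> b, v)"

fun ewh :: "'b list \<Rightarrow> 'b list \<Rightarrow> 'b edge \<Rightarrow> 'b edge" where
  "ewh x y (u, lr, b, v) = (x @ u, lr, b, v @ y)"

definition valid_edge :: "('b list \<times> 'b list) set \<Rightarrow> 'b edge \<Rightarrow> bool" where
  "valid_edge R e = (fst (snd e) \<in> R)"

fun ptgt :: "'b list \<Rightarrow> 'b edge list \<Rightarrow> 'b list" where
  "ptgt w [] = w"
| "ptgt w (e # es) = ptgt (etgt e) es"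

fun is_path :: "('b list \<times> 'b list) set \<Rightarrow> 'b list \<Rightarrow> 'b edge list \<Rightarrow> bool" where
  "is_path R w [] = True"
| "is_path R w (e # es) = (valid_edge R e \<and> esrc e = w \<and> is_path R (etgt e) es)"

inductive htpy :: "('b list \<times> 'b list) set \<Rightarrow> ('b dpath \<times> 'b dpath) set
    \<Rightarrow> 'b dpath \<Rightarrow> 'b dpath \<Rightarrow> bool"
  for R :: "('b list \<times> 'b list) set" and X :: "('b dpath \<times> 'b dpath) set" where
  gen: "(p, q) \<in> X \<Longrightarrow> htpy R X p q"
| refl: "is_path R w es \<Longrightarrow> htpy R X (w, es) (w, es)"
| sym: "htpy R X p q \<Longrightarrow> htpy R X q p"
| trans: "htpy R X p q \<Longrightarrow> htpy R X q r \<Longrightarrow> htpy R X p r"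
| ctx: "htpy R X (w, p) (w, q) \<Longrightarrow> is_path R w0 s \<Longrightarrow> ptgt w0 s = w
         \<Longrightarrow> is_path R (ptgt w p) t \<Longrightarrow> htpy R X (w0, s @ p @ t) (w0, s @ q @ t)"
| whisk: "htpy R X (w, p) (w, q) \<Longrightarrow>
          htpy R X (x @ w @ y, map (ewh x y) p) (x @ w @ y, map (ewh x y) q)"
| inv: "valid_edge R e \<Longrightarrow> htpy R X (esrc e, [e, einv e]) (esrc e, [])"
| peiffer: "valid_edge R e1 \<Longrightarrow> valid_edge R e2 \<Longrightarrow>
    htpy R X (esrc e1 @ esrc e2, [ewh [] (esrc e2) e1, ewh (etgt e1) [] e2])
             (esrc e1 @ esrc e2, [ewh (esrc e1) [] e2, ewh [] (etgt e2) e1])"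

definition parallel :: "('b list \<times> 'b list) set \<Rightarrow> 'b dpath \<Rightarrow> 'b dpath \<Rightarrow> bool" where
  "parallel R P Q = (fst P = fst Q \<and> is_path R (fst P) (snd P) \<and> is_path R (fst Q) (snd Q)
                      \<and> ptgt (fst P) (snd P) = ptgt (fst Q) (snd Q))"

definition homotopy_base :: "'b set \<Rightarrow> ('b list \<times> 'b list) set \<Rightarrow> ('b dpath \<times> 'b dpath) set \<Rightarrow> bool" where
  "homotopy_base B R X =
     ((\<forall>(P, Q) \<in> X. parallel R P Q \<and> set (fst P) \<subseteq> B) \<and>
      (\<forall>P Q. set (fst P) \<subseteq> B \<longrightarrow> parallel R P Q \<longrightarrow> htpy R X P Q))"

definition FDT :: "'a set \<Rightarrow> ('a list \<Rightarrow> 'a list \<Rightarrow> bool) \<Rightarrow> bool" where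
  "FDT A E = (\<exists>(B :: nat set) R X. finite B \<and> finite R \<and>
      (\<forall>(l, r) \<in> R. set l \<subseteq> B \<and> set r \<subseteq> B) \<and>
      presents B R A E \<and> finite X \<and> homotopy_base B R X)"

end

theory Submission
  imports Defs "HOL-Library.Countable"
begin

lemma is_path_append[simp]: "is_path R w (p @ q) = (is_path R w p \<and> is_path R (ptgt w p) q)"
  by (induction p arbitrary: w) auto

lemma ptgt_append[simp]: "ptgt w (p @ q) = ptgt (ptgt w p) q"
  by (induction p arbitrary: w) auto

lemma esrc_einv[simp]: "esrc (einv e) = etgt e" and etgt_einv[simp]: "etgt (einv e) = esrc e"
  and valid_einv[simp]: "valid_edge R (einv e) = valid_edge R e"
  by (cases e; auto simp: valid_edge_def)+

definition ipath :: "'b edge list \<Rightarrow> 'b edge list" where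
  "ipath p = rev (map einv p)"

lemma ipath_path: "is_path R w p \<Longrightarrow> is_path R (ptgt w p) (ipath p) \<and> ptgt (ptgt w p) (ipath p) = w"
  by (induction p arbitrary: w) (auto simp: ipath_def)

lemma htpy_cancel: "is_path R w p \<Longrightarrow> htpy R X (w, p @ ipath p) (w, [])"
proof (induction p arbitrary: w)
  case Nil
  then show ?case by (auto simp: ipath_def intro: htpy.refl)
next
  case (Cons e p)
  have e: "valid_edge R e" "esrc e = w" and p: "is_path R (etgt e) p" using Cons.prems by auto
  have 1: "htpy R X (w, [e] @ (p @ ipath p) @ [einv e]) (w, [e] @ [] @ [einv e])"
    apply (rule htpy.ctx[OF Cons.IH[OF p]])
    using e ipath_path[OF p] by auto
  have 2: "htpy R X (esrc e, [e, einv e]) (esrc e, [])" by (rule htpy.inv[OF e(1)])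
  show ?case using htpy.trans[OF 1] 2 e by (simp add: ipath_def)
qed

definition ppath :: "('b list \<times> 'b list) set \<Rightarrow> 'b list \<Rightarrow> 'b edge list \<Rightarrow> bool" where
  "ppath R w p = (is_path R w p \<and> (\<forall>e\<in>set p. fst (snd (snd e))))"

lemma ppath_simps[simp]: "ppath R w [] = True"
  "ppath R w (e # p) = (valid_edge R e \<and> esrc e = w \<and> fst (snd (snd e)) \<and> ppath R (etgt e) p)"
  by (auto simp: ppath_def)

lemma ppath_append[simp]: "ppath R w (p @ q) = (ppath R w p \<and> ppath R (ptgt w p) q)"
  by (auto simp: ppath_def)

lemma pedge_rstep: "valid_edge R e \<Longrightarrow> fst (snd (snd e)) \<Longrightarrow> rstep R (esrc e) (etgt e)"
  by (cases e) (auto simp: valid_edge_def rstep_def; blast)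

lemma rstep_pedge: "rstep R x y \<Longrightarrow> \<exists>e. valid_edge R e \<and> fst (snd (snd e)) \<and> esrc e = x \<and> etgt e = y"
  unfolding rstep_def
  apply clarify
  subgoal for u v l r by (rule exI[of _ "(u,(l,r),True,v)"]) (auto simp: valid_edge_def)
  done

lemma ewh_simps[simp]: "esrc (ewh x y e) = x @ esrc e @ y" "etgt (ewh x y e) = x @ etgt e @ y"
  "valid_edge R (ewh x y e) = valid_edge R e" "fst (snd (snd (ewh x y e))) = fst (snd (snd e))"
  by (cases e; auto simp: valid_edge_def)+

lemma ppath_whisk: "ppath R w p \<Longrightarrow> ppath R (x @ w @ y) (map (ewh x y) p) \<and> ptgt (x @ w @ y) (map (ewh x y) p) = x @ ptgt w p @ y"
  by (induction p arbitrary: w) auto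

locale squier =
  fixes R :: "('b list \<times> 'b list) set" and B :: "'b set" and k :: nat
    and wt :: "'b list \<Rightarrow> nat" and N :: "'b list \<Rightarrow> 'b list"
  assumes finR: "finite R" and finB: "finite B"
  and rulesB: "(l,r) \<in> R \<Longrightarrow> set l \<subseteq> B \<and> set r \<subseteq> B \<and> length l \<le> k"
  and wt_dec: "rstep R x y \<Longrightarrow> wt y < wt x"
  and N_inv: "rstep R x y \<Longrightarrow> set x \<subseteq> B \<Longrightarrow> N x = N y"
  and N_irr: "set x \<subseteq> B \<Longrightarrow> \<forall>y. \<not> rstep R x y \<Longrightarrow> N x = x"
begin

lemma edge_B: "valid_edge R e \<Longrightarrow> set (esrc e) \<subseteq> B \<Longrightarrow> set (etgt e) \<subseteq> B"
  by (cases e) (auto simp: valid_edge_def dest!: rulesB split: if_splits)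

lemma path_B: "is_path R w p \<Longrightarrow> set w \<subseteq> B \<Longrightarrow> set (ptgt w p) \<subseteq> B"
  by (induction p arbitrary: w) (auto dest: edge_B)

lemma edge_N: assumes "valid_edge R e" "set (esrc e) \<subseteq> B" shows "N (etgt e) = N (esrc e)"
proof -
  obtain u l r b v where e: "e = (u,(l,r),b,v)" by (cases e) auto
  have lr: "(l,r) \<in> R" using assms(1) e by (simp add: valid_edge_def)
  have st: "rstep R (u@l@v) (u@r@v)" unfolding rstep_def using lr by blast
  have "set (u@l@v) \<subseteq> B" using assms(2) rulesB[OF lr] e by (auto split: if_splits)
  then have "N (u@l@v) = N (u@r@v)" using N_inv[OF st] by blast
  then show ?thesis using e by simp
qed

lemma path_N: "is_path R w p \<Longrightarrow> set w \<subseteq> B \<Longrightarrow> N (ptgt w p) = N w"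
  by (induction p arbitrary: w) (auto simp: edge_N edge_B)

lemma rstep_B: "rstep R x y \<Longrightarrow> set x \<subseteq> B \<Longrightarrow> set y \<subseteq> B"
  unfolding rstep_def by (auto dest!: rulesB)

lemma nf_exists: "set w \<subseteq> B \<Longrightarrow> \<exists>p. ppath R w p \<and> ptgt w p = N w"
proof (induction "wt w" arbitrary: w rule: less_induct)
  case less
  show ?case
  proof (cases "\<exists>y. rstep R w y")
    case True
    then obtain y where y: "rstep R w y" by blast
    then obtain e where e: "valid_edge R e" "fst (snd (snd e))" "esrc e = w" "etgt e = y"
      using rstep_pedge by blast
    obtain p where "ppath R y p" "ptgt y p = N y"
      using less(1)[OF wt_dec[OF y] rstep_B[OF y less(2)]] by blast
    then have "ppath R w (e # p) \<and> ptgt w (e # p) = N w" using e N_inv[OF y less(2)] by simp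
    then show ?thesis by blast
  next
    case False
    then have "N w = w" using N_irr[OF less(2)] by blast
    then have "ppath R w [] \<and> ptgt w [] = N w" by simp
    then show ?thesis by blast
  qed
qed

lemma N_irred: "set w \<subseteq> B \<Longrightarrow> \<not> rstep R (N w) y"
proof (induction "wt w" arbitrary: w rule: less_induct)
  case less
  show ?case
  proof (cases "\<exists>y. rstep R w y")
    case True
    then obtain z where z: "rstep R w z" by blast
    have "\<not> rstep R (N z) y" by (rule less(1)[OF wt_dec[OF z] rstep_B[OF z less(2)]])
    then show ?thesis using N_inv[OF z less(2)] by simp
  next
    case False
    then have "N w = w" using N_irr[OF less(2)] by blast
    then show ?thesis using False by simp
  qed
qed

definition nfp :: "'b list \<Rightarrow> 'b edge list" where
  "nfp w = (SOME p. ppath R w p \<and> ptgt w p = N w)"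

lemma nfp: "set w \<subseteq> B \<Longrightarrow> ppath R w (nfp w) \<and> ptgt w (nfp w) = N w"
  unfolding nfp_def by (rule someI_ex[OF nf_exists])

definition pedges :: "'b list \<Rightarrow> 'b edge set" where
  "pedges w = {e. valid_edge R e \<and> fst (snd (snd e)) \<and> esrc e = w}"

definition XX :: "('b dpath \<times> 'b dpath) set" where
  "XX = {((w, a1 # nfp (etgt a1)), (w, a2 # nfp (etgt a2))) | w a1 a2.
           set w \<subseteq> B \<and> length w \<le> 2 * k \<and> a1 \<in> pedges w \<and> a2 \<in> pedges w}"

end

context squier begin

lemma lc_overlap:
  assumes B: "set (x @ w0 @ y) \<subseteq> B" and len: "length w0 \<le> 2 * k"
    and a1: "a1 \<in> pedges w0" and a2: "a2 \<in> pedges w0"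
  shows "\<exists>r1 r2. ppath R (etgt (ewh x y a1)) r1 \<and> ppath R (etgt (ewh x y a2)) r2
    \<and> ptgt (etgt (ewh x y a1)) r1 = ptgt (etgt (ewh x y a2)) r2
    \<and> htpy R XX (x @ w0 @ y, ewh x y a1 # r1) (x @ w0 @ y, ewh x y a2 # r2)"
proof -
  have w0B: "set w0 \<subseteq> B" using B by auto
  have v1: "valid_edge R a1" "esrc a1 = w0" "fst (snd (snd a1))" using a1 by (auto simp: pedges_def)
  have v2: "valid_edge R a2" "esrc a2 = w0" "fst (snd (snd a2))" using a2 by (auto simp: pedges_def)
  have t1B: "set (etgt a1) \<subseteq> B" using edge_B v1 w0B by auto
  have t2B: "set (etgt a2) \<subseteq> B" using edge_B v2 w0B by auto
  have n1: "ppath R (etgt a1) (nfp (etgt a1)) \<and> ptgt (etgt a1) (nfp (etgt a1)) = N (etgt a1)"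
    using nfp[OF t1B] .
  have n2: "ppath R (etgt a2) (nfp (etgt a2)) \<and> ptgt (etgt a2) (nfp (etgt a2)) = N (etgt a2)"
    using nfp[OF t2B] .
  have N1: "N (etgt a1) = N w0" using edge_N v1 w0B by auto
  have N2: "N (etgt a2) = N w0" using edge_N v2 w0B by auto
  have X: "((w0, a1 # nfp (etgt a1)), (w0, a2 # nfp (etgt a2))) \<in> XX"
    unfolding XX_def using w0B len a1 a2 by blast
  have h: "htpy R XX (x @ w0 @ y, map (ewh x y) (a1 # nfp (etgt a1)))
                     (x @ w0 @ y, map (ewh x y) (a2 # nfp (etgt a2)))"
    by (rule htpy.whisk[OF htpy.gen[OF X]])
  show ?thesis
    apply (rule exI[of _ "map (ewh x y) (nfp (etgt a1))"])
    apply (rule exI[of _ "map (ewh x y) (nfp (etgt a2))"])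
    using h ppath_whisk[of R "etgt a1" "nfp (etgt a1)" x y] ppath_whisk[of R "etgt a2" "nfp (etgt a2)" x y]
      n1 n2 N1 N2 by simp
qed

lemma lc_disj:
  assumes "(l1, s1) \<in> R" "(l2, s2) \<in> R"
  shows "htpy R XX (u1 @ l1 @ m @ l2 @ v2,
      [(u1, (l1, s1), True, m @ l2 @ v2), (u1 @ s1 @ m, (l2, s2), True, v2)])
     (u1 @ l1 @ m @ l2 @ v2,
      [(u1 @ l1 @ m, (l2, s2), True, v2), (u1, (l1, s1), True, m @ s2 @ v2)])"
proof -
  have va: "valid_edge R ([], (l1, s1), True, [])" and vb: "valid_edge R (m, (l2, s2), True, [])"
    using assms by (auto simp: valid_edge_def)
  have "htpy R XX (u1 @ (esrc ([], (l1, s1), True, []) @ esrc (m, (l2, s2), True, [])) @ v2,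
     map (ewh u1 v2) [ewh [] (esrc (m, (l2, s2), True, [])) ([], (l1, s1), True, []),
                      ewh (etgt ([], (l1, s1), True, [])) [] (m, (l2, s2), True, [])])
    (u1 @ (esrc ([], (l1, s1), True, []) @ esrc (m, (l2, s2), True, [])) @ v2,
     map (ewh u1 v2) [ewh (esrc ([], (l1, s1), True, [])) [] (m, (l2, s2), True, []),
                      ewh [] (etgt (m, (l2, s2), True, [])) ([], (l1, s1), True, [])])"
    by (rule htpy.whisk[OF htpy.peiffer[OF va vb]])
  then show ?thesis by simp
qed

lemma lc1:
  assumes uB: "set u \<subseteq> B" and e1: "e1 \<in> pedges u" and e2: "e2 \<in> pedges u"
    and le: "length (fst e1) \<le> length (fst e2)"
  shows "\<exists>r1 r2. ppath R (etgt e1) r1 \<and> ppath R (etgt e2) r2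
    \<and> ptgt (etgt e1) r1 = ptgt (etgt e2) r2 \<and> htpy R XX (u, e1 # r1) (u, e2 # r2)"
proof -
  obtain u1 l1 s1 b1 v1 where E1: "e1 = (u1, (l1, s1), b1, v1)" by (cases e1) auto
  obtain u2 l2 s2 b2 v2 where E2: "e2 = (u2, (l2, s2), b2, v2)" by (cases e2) auto
  have R1: "(l1, s1) \<in> R" and b1: "b1" and u_1: "u = u1 @ l1 @ v1"
    using e1 E1 by (auto simp: pedges_def valid_edge_def)
  have R2: "(l2, s2) \<in> R" and b2: "b2" and u_2: "u = u2 @ l2 @ v2"
    using e2 E2 by (auto simp: pedges_def valid_edge_def)
  have le': "length u1 \<le> length u2" using le E1 E2 by simp
  obtain t where t: "u2 = u1 @ t" "l1 @ v1 = t @ l2 @ v2"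
  proof -
    have "u1 @ (l1 @ v1) = u2 @ (l2 @ v2)" using u_1 u_2 by simp
    then obtain us where "u1 = u2 @ us \<and> us @ l1 @ v1 = l2 @ v2 \<or> u1 @ us = u2 \<and> l1 @ v1 = us @ l2 @ v2"
      unfolding append_eq_append_conv2 by blast
    then show ?thesis
    proof
      assume a: "u1 = u2 @ us \<and> us @ l1 @ v1 = l2 @ v2"
      then have "us = []" using le' by simp
      then show ?thesis using a that[of "[]"] by simp
    next
      assume "u1 @ us = u2 \<and> l1 @ v1 = us @ l2 @ v2"
      then show ?thesis using that by auto
    qed
  qed
  obtain us where "l1 = t @ us \<and> us @ v1 = l2 @ v2 \<or> l1 @ us = t \<and> v1 = us @ l2 @ v2"
    using t(2) unfolding append_eq_append_conv2 by blast
  then show ?thesis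
  proof
    assume a: "l1 @ us = t \<and> v1 = us @ l2 @ v2"
    have h: "htpy R XX (u1 @ l1 @ us @ l2 @ v2,
      [(u1, (l1, s1), True, us @ l2 @ v2), (u1 @ s1 @ us, (l2, s2), True, v2)])
     (u1 @ l1 @ us @ l2 @ v2,
      [(u1 @ l1 @ us, (l2, s2), True, v2), (u1, (l1, s1), True, us @ s2 @ v2)])"
      by (rule lc_disj[OF R1 R2])
    show ?thesis
      apply (rule exI[of _ "[(u1 @ s1 @ us, (l2, s2), True, v2)]"])
      apply (rule exI[of _ "[(u1, (l1, s1), True, us @ s2 @ v2)]"])
      using h a t R1 R2 b1 b2 E1 E2 u_1 by (simp add: valid_edge_def)
  next
    assume a: "l1 = t @ us \<and> us @ v1 = l2 @ v2"
    obtain ws where "us = l2 @ ws \<and> ws @ v1 = v2 \<or> us @ ws = l2 \<and> v1 = ws @ v2"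
      using a unfolding append_eq_append_conv2 by blast
    then show ?thesis
    proof
      assume c: "us = l2 @ ws \<and> ws @ v1 = v2"
      define a1 where "a1 = (([]::'b list), (l1, s1), True, ([]::'b list))"
      define a2 where "a2 = (t, (l2, s2), True, ws)"
      have len: "length l1 \<le> 2 * k" using rulesB[OF R1] by simp
      have p1: "a1 \<in> pedges l1" using R1 by (simp add: a1_def pedges_def valid_edge_def)
      have p2: "a2 \<in> pedges l1" using R2 a c by (simp add: a2_def pedges_def valid_edge_def)
      have uu: "u = u1 @ l1 @ v1" by (rule u_1)
      have ee1: "e1 = ewh u1 v1 a1" using E1 b1 by (simp add: a1_def)
      have ee2: "e2 = ewh u1 v1 a2" using E2 b2 t c by (simp add: a2_def)
      show ?thesis using lc_overlap[of u1 l1 v1 a1 a2, OF _ len p1 p2] uB uu ee1 ee2 by simp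
    next
      assume c: "us @ ws = l2 \<and> v1 = ws @ v2"
      define a1 where "a1 = (([]::'b list), (l1, s1), True, ws)"
      define a2 where "a2 = (t, (l2, s2), True, ([]::'b list))"
      have len: "length (t @ l2) \<le> 2 * k" using rulesB[OF R1] rulesB[OF R2] a by simp
      have p1: "a1 \<in> pedges (t @ l2)" using R1 a c by (simp add: a1_def pedges_def valid_edge_def)
      have p2: "a2 \<in> pedges (t @ l2)" using R2 by (simp add: a2_def pedges_def valid_edge_def)
      have uu: "u = u1 @ (t @ l2) @ v2" using u_2 t by simp
      have ee1: "e1 = ewh u1 v2 a1" using E1 b1 c by (simp add: a1_def)
      have ee2: "e2 = ewh u1 v2 a2" using E2 b2 t by (simp add: a2_def)
      show ?thesis using lc_overlap[of u1 "t @ l2" v2 a1 a2, OF _ len p1 p2] uB uu ee1 ee2 by simp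
    qed
  qed
qed

lemma lc:
  assumes uB: "set u \<subseteq> B" and e1: "e1 \<in> pedges u" and e2: "e2 \<in> pedges u"
  shows "\<exists>r1 r2. ppath R (etgt e1) r1 \<and> ppath R (etgt e2) r2
    \<and> ptgt (etgt e1) r1 = ptgt (etgt e2) r2 \<and> htpy R XX (u, e1 # r1) (u, e2 # r2)"
proof (cases "length (fst e1) \<le> length (fst e2)")
  case True
  then show ?thesis using lc1[OF uB e1 e2] by blast
next
  case False
  then obtain r1 r2 where "ppath R (etgt e2) r1 \<and> ppath R (etgt e1) r2
    \<and> ptgt (etgt e2) r1 = ptgt (etgt e1) r2 \<and> htpy R XX (u, e2 # r1) (u, e1 # r2)"
    using lc1[OF uB e2 e1] by fastforce
  then show ?thesis by (metis htpy.sym)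
qed

end

context squier begin

lemma ppath_is_path: "ppath R w p \<Longrightarrow> is_path R w p" by (simp add: ppath_def)

lemma S: "set u \<subseteq> B \<Longrightarrow> ppath R u p \<Longrightarrow> ptgt u p = N u \<Longrightarrow> ppath R u q \<Longrightarrow> ptgt u q = N u
   \<Longrightarrow> htpy R XX (u, p) (u, q)"
proof (induction "wt u" arbitrary: u p q rule: less_induct)
  case less
  note uB = less(2)
  show ?case
  proof (cases p)
    case Nil
    show ?thesis
    proof (cases q)
      case Nil
      then show ?thesis using \<open>p = []\<close> by (simp add: htpy.refl)
    next
      case (Cons e q')
      have "u = N u" using less(4) Nil by simp
      moreover have "rstep R u (etgt e)" using pedge_rstep[of R e] less(5) Cons by auto
      ultimately show ?thesis using N_irred[OF uB] by metis
    qed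
  next
    case (Cons e1 p')
    show ?thesis
    proof (cases q)
      case Nil
      have "u = N u" using less(6) Nil by simp
      moreover have "rstep R u (etgt e1)" using pedge_rstep[of R e1] less(3) Cons by auto
      ultimately show ?thesis using N_irred[OF uB] by metis
    next
      case (Cons e2 q')
      have pe1: "e1 \<in> pedges u" using less(3) \<open>p = e1 # p'\<close> by (simp add: pedges_def)
      have pe2: "e2 \<in> pedges u" using less(5) Cons by (simp add: pedges_def)
      obtain r1 r2 where r: "ppath R (etgt e1) r1" "ppath R (etgt e2) r2"
        "ptgt (etgt e1) r1 = ptgt (etgt e2) r2" "htpy R XX (u, e1 # r1) (u, e2 # r2)"
        using lc[OF uB pe1 pe2] by blast
      define z where "z = ptgt (etgt e1) r1"
      have v1B: "set (etgt e1) \<subseteq> B" using edge_B pe1 uB by (auto simp: pedges_def)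
      have v2B: "set (etgt e2) \<subseteq> B" using edge_B pe2 uB by (auto simp: pedges_def)
      have zB: "set z \<subseteq> B" unfolding z_def using path_B[OF ppath_is_path[OF r(1)] v1B] .
      have Nv1: "N (etgt e1) = N u" using edge_N pe1 uB by (auto simp: pedges_def)
      have Nv2: "N (etgt e2) = N u" using edge_N pe2 uB by (auto simp: pedges_def)
      have Nz: "N z = N u" unfolding z_def using path_N[OF ppath_is_path[OF r(1)] v1B] Nv1 by simp
      have s: "ppath R z (nfp z)" "ptgt z (nfp z) = N u" using nfp[OF zB] Nz by auto
      have w1: "wt (etgt e1) < wt u" using wt_dec[OF pedge_rstep[of R e1]] pe1 by (auto simp: pedges_def)
      have w2: "wt (etgt e2) < wt u" using wt_dec[OF pedge_rstep[of R e2]] pe2 by (auto simp: pedges_def)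
      have h1: "htpy R XX (etgt e1, p') (etgt e1, r1 @ nfp z)"
        apply (rule less(1)[OF w1 v1B])
        using less(3,4) \<open>p = e1 # p'\<close> Nv1 r(1) s z_def by auto
      have h2: "htpy R XX (etgt e2, q') (etgt e2, r2 @ nfp z)"
        apply (rule less(1)[OF w2 v2B])
        using less(5,6) Cons Nv2 r(2,3) s z_def by auto
      have e1v: "valid_edge R e1" "esrc e1 = u" using pe1 by (auto simp: pedges_def)
      have e2v: "valid_edge R e2" "esrc e2 = u" using pe2 by (auto simp: pedges_def)
      have k1: "htpy R XX (u, [e1] @ p' @ []) (u, [e1] @ (r1 @ nfp z) @ [])"
        by (rule htpy.ctx[OF h1]) (use e1v in auto)
      have k2: "htpy R XX (u, [e2] @ q' @ []) (u, [e2] @ (r2 @ nfp z) @ [])"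
        by (rule htpy.ctx[OF h2]) (use e2v in auto)
      have k3: "htpy R XX (u, [] @ (e1 # r1) @ nfp z) (u, [] @ (e2 # r2) @ nfp z)"
        by (rule htpy.ctx[OF r(4)]) (use s z_def in \<open>auto simp: ppath_def\<close>)
      have A: "htpy R XX (u, e1 # p') (u, e1 # r1 @ nfp z)" using k1 by simp
      have B: "htpy R XX (u, e1 # r1 @ nfp z) (u, e2 # r2 @ nfp z)" using k3 by simp
      have C: "htpy R XX (u, e2 # q') (u, e2 # r2 @ nfp z)" using k2 by simp
      show ?thesis unfolding \<open>p = e1 # p'\<close> Cons by (rule htpy.trans[OF A htpy.trans[OF B htpy.sym[OF C]]])
    qed
  qed
qed

lemma edge_htpy: assumes e: "valid_edge R e" "esrc e = w" and wB: "set w \<subseteq> B"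
  shows "htpy R XX (w, e # nfp (etgt e)) (w, nfp w)"
proof -
  have vB: "set (etgt e) \<subseteq> B" using edge_B e wB by auto
  have Nv: "N (etgt e) = N w" using edge_N e wB by auto
  have nv1: "ppath R (etgt e) (nfp (etgt e))" and nv2: "ptgt (etgt e) (nfp (etgt e)) = N w"
    using nfp[OF vB] Nv by auto
  have nw1: "ppath R w (nfp w)" and nw2: "ptgt w (nfp w) = N w" using nfp[OF wB] by auto
  have nw3: "is_path R w (nfp w)" using nw1 by (rule ppath_is_path)
  show ?thesis
  proof (cases "fst (snd (snd e))")
    case True
    have pp: "ppath R w (e # nfp (etgt e))" using e True nv1 by simp
    have pt: "ptgt w (e # nfp (etgt e)) = N w" using nv2 by simp
    show ?thesis by (rule S[OF wB pp pt nw1 nw2])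
  next
    case False
    obtain a l r b v where E: "e = (a, (l, r), b, v)" by (cases e) auto
    have ie: "valid_edge R (einv e)" "esrc (einv e) = etgt e" "fst (snd (snd (einv e)))"
      using e(1) False unfolding E by (auto simp: valid_edge_def)
    have pp: "ppath R (etgt e) (einv e # nfp w)" using ie nw1 e(2) by simp
    have pt: "ptgt (etgt e) (einv e # nfp w) = N (etgt e)" using nw2 e(2) Nv by simp
    have h1: "htpy R XX (etgt e, einv e # nfp w) (etgt e, nfp (etgt e))"
      by (rule S[OF vB pp pt nv1]) (simp add: nv2 Nv)
    have c1: "is_path R w [e]" using e by simp
    have c2: "ptgt w [e] = etgt e" by simp
    have c3: "is_path R (ptgt (etgt e) (einv e # nfp w)) []" by simp
    have k1: "htpy R XX (w, [e] @ (einv e # nfp w) @ []) (w, [e] @ nfp (etgt e) @ [])"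
      by (rule htpy.ctx[OF h1 c1 c2 c3])
    have h2: "htpy R XX (w, [e, einv e]) (w, [])" using htpy.inv[OF e(1)] e(2) by simp
    have d3: "is_path R (ptgt w [e, einv e]) (nfp w)" using nw3 e(2) by simp
    have k2: "htpy R XX (w, [] @ [e, einv e] @ nfp w) (w, [] @ [] @ nfp w)"
      by (rule htpy.ctx[OF h2 _ _ d3]) simp_all
    have k1': "htpy R XX (w, e # einv e # nfp w) (w, e # nfp (etgt e))" using k1 by simp
    have k2': "htpy R XX (w, e # einv e # nfp w) (w, nfp w)" using k2 by simp
    show ?thesis by (rule htpy.trans[OF htpy.sym[OF k1'] k2'])
  qed
qed

lemma path_htpy: "set w \<subseteq> B \<Longrightarrow> is_path R w p \<Longrightarrow> htpy R XX (w, p @ nfp (ptgt w p)) (w, nfp w)"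
proof (induction p arbitrary: w)
  case Nil
  have "is_path R w (nfp w)" using nfp[OF Nil(1)] ppath_is_path by blast
  then show ?case by (simp add: htpy.refl)
next
  case (Cons e p)
  have e: "valid_edge R e" "esrc e = w" and p: "is_path R (etgt e) p" using Cons.prems by auto
  have vB: "set (etgt e) \<subseteq> B" using edge_B e Cons.prems by auto
  have c1: "is_path R w [e]" using e by simp
  have c2: "ptgt w [e] = etgt e" by simp
  have c3: "is_path R (ptgt (etgt e) (p @ nfp (ptgt (etgt e) p))) []" by simp
  have k: "htpy R XX (w, [e] @ (p @ nfp (ptgt (etgt e) p)) @ []) (w, [e] @ nfp (etgt e) @ [])"
    by (rule htpy.ctx[OF Cons.IH[OF vB p] c1 c2 c3])
  have k': "htpy R XX (w, e # p @ nfp (ptgt (etgt e) p)) (w, e # nfp (etgt e))" using k by simp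
  have "htpy R XX (w, e # p @ nfp (ptgt (etgt e) p)) (w, nfp w)"
    by (rule htpy.trans[OF k' edge_htpy[OF e Cons.prems(1)]])
  then show ?case by simp
qed

end

context squier begin

lemma finite_XX: "finite XX"
proof -
  define W where "W = {w. set w \<subseteq> B \<and> length w \<le> 2 * k}"
  have fW: "finite W" unfolding W_def by (rule finite_lists_length_le[OF finB])
  define E where "E = W \<times> R \<times> (UNIV :: bool set) \<times> W"
  have fE: "finite E" unfolding E_def using fW finR by auto
  have pe: "pedges w \<subseteq> E" if "w \<in> W" for w
  proof
    fix a assume "a \<in> pedges w"
    then obtain u l r b v where a: "a = (u,(l,r),b,v)" "(l,r) \<in> R" "b" "u @ l @ v = w"
      by (cases a) (auto simp: pedges_def valid_edge_def)
    then show "a \<in> E" using that by (auto simp: E_def W_def)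
  qed
  have "XX \<subseteq> (\<lambda>(w, a1, a2). ((w, a1 # nfp (etgt a1)), (w, a2 # nfp (etgt a2)))) ` (W \<times> E \<times> E)"
  proof
    fix x assume "x \<in> XX"
    then obtain w a1 a2 where x: "x = ((w, a1 # nfp (etgt a1)), (w, a2 # nfp (etgt a2)))"
      "set w \<subseteq> B" "length w \<le> 2 * k" "a1 \<in> pedges w" "a2 \<in> pedges w" unfolding XX_def by blast
    have "w \<in> W" using x by (simp add: W_def)
    then have "(w, a1, a2) \<in> W \<times> E \<times> E" using pe x by blast
    then show "x \<in> (\<lambda>(w, a1, a2). ((w, a1 # nfp (etgt a1)), (w, a2 # nfp (etgt a2)))) ` (W \<times> E \<times> E)"
      using x(1) by (simp add: image_iff)
  qed
  then show ?thesis using finite_subset fW fE by blast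
qed


lemma XX_par: "(P, Q) \<in> XX \<Longrightarrow> parallel R P Q \<and> set (fst P) \<subseteq> B"
proof -
  assume "(P, Q) \<in> XX"
  then obtain w a1 a2 where X: "P = (w, a1 # nfp (etgt a1))" "Q = (w, a2 # nfp (etgt a2))"
    "set w \<subseteq> B" "a1 \<in> pedges w" "a2 \<in> pedges w" unfolding XX_def by blast
  have v1: "valid_edge R a1" "esrc a1 = w" "fst (snd (snd a1))" using X by (auto simp: pedges_def)
  have v2: "valid_edge R a2" "esrc a2 = w" "fst (snd (snd a2))" using X by (auto simp: pedges_def)
  have b1: "set (etgt a1) \<subseteq> B" using edge_B v1 X by auto
  have b2: "set (etgt a2) \<subseteq> B" using edge_B v2 X by auto
  have N1: "N (etgt a1) = N w" using edge_N v1 X by auto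
  have N2: "N (etgt a2) = N w" using edge_N v2 X by auto
  have p1: "is_path R w (a1 # nfp (etgt a1))" using v1 nfp[OF b1] ppath_is_path by auto
  have p2: "is_path R w (a2 # nfp (etgt a2))" using v2 nfp[OF b2] ppath_is_path by auto
  have t1: "ptgt w (a1 # nfp (etgt a1)) = N w" using nfp[OF b1] N1 by simp
  have t2: "ptgt w (a2 # nfp (etgt a2)) = N w" using nfp[OF b2] N2 by simp
  show ?thesis unfolding parallel_def X using p1 p2 t1 t2 X(3) by simp
qed

lemma par_htpy:
  assumes wB: "set w \<subseteq> B" and pp: "is_path R w p" "is_path R w q" "ptgt w p = ptgt w q"
  shows "htpy R XX (w, p) (w, q)"
proof -
  define t where "t = ptgt w p"
  have tB: "set t \<subseteq> B" unfolding t_def using path_B[OF pp(1) wB] .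
  have Nt: "N t = N w" unfolding t_def using path_N[OF pp(1) wB] .
  have nt1: "is_path R t (nfp t)" and nt2: "ptgt t (nfp t) = N t"
    using nfp[OF tB] ppath_is_path by auto
  have nw1: "is_path R w (nfp w)" and nw2: "ptgt w (nfp w) = N w"
    using nfp[OF wB] ppath_is_path by auto
  have c: "htpy R XX (t, nfp t @ ipath (nfp t)) (t, [])" by (rule htpy_cancel[OF nt1])
  have ip: "is_path R (N t) (ipath (nfp t))" using ipath_path[OF nt1] nt2 by simp
  have gen: "htpy R XX (w, r) (w, nfp w @ ipath (nfp t))" if r: "is_path R w r" "ptgt w r = t" for r
  proof -
    have d3: "is_path R (ptgt t []) []" by simp
    have k1: "htpy R XX (w, r @ [] @ []) (w, r @ (nfp t @ ipath (nfp t)) @ [])"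
      by (rule htpy.ctx[OF htpy.sym[OF c] r(1) r(2) d3])
    have e3: "is_path R (ptgt w (r @ nfp (ptgt w r))) (ipath (nfp t))" using r(2) nt2 ip by simp
    have k2: "htpy R XX (w, [] @ (r @ nfp (ptgt w r)) @ ipath (nfp t)) (w, [] @ nfp w @ ipath (nfp t))"
      by (rule htpy.ctx[OF path_htpy[OF wB r(1)] _ _ e3]) simp_all
    have k1': "htpy R XX (w, r) (w, r @ nfp t @ ipath (nfp t))" using k1 by simp
    have k2': "htpy R XX (w, r @ nfp t @ ipath (nfp t)) (w, nfp w @ ipath (nfp t))" using k2 r by simp
    show ?thesis by (rule htpy.trans[OF k1' k2'])
  qed
  have g1: "htpy R XX (w, p) (w, nfp w @ ipath (nfp t))" using gen[OF pp(1)] t_def by simp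
  have g2: "htpy R XX (w, q) (w, nfp w @ ipath (nfp t))" using gen[OF pp(2)] pp(3) t_def by simp
  show ?thesis by (rule htpy.trans[OF g1 htpy.sym[OF g2]])
qed

lemma hbase: "homotopy_base B R XX"
  unfolding homotopy_base_def
proof (intro conjI allI impI)
  show "\<forall>(P, Q)\<in>XX. parallel R P Q \<and> set (fst P) \<subseteq> B" using XX_par by blast
next
  fix P Q :: "'b dpath"
  assume PB: "set (fst P) \<subseteq> B" and par: "parallel R P Q"
  obtain w p where P: "P = (w, p)" by (cases P)
  obtain w' q where Q: "Q = (w', q)" by (cases Q)
  have "w' = w" "is_path R w p" "is_path R w q" "ptgt w p = ptgt w q" using par P Q by (auto simp: parallel_def)
  then show "htpy R XX P Q" using par_htpy[of w p q] PB P Q by simp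
qed

theorem squier_main: "\<exists>X. finite X \<and> homotopy_base B R X"
  using finite_XX hbase by blast

end

lemma rins_hd_in: "a \<in> hd ` set (rins T a)"
  by (induction T) auto

lemma rins_hds: "hd ` set (rins T a) \<subseteq> hd ` set T \<union> {a}"
  by (induction T) auto

lemma rins_sorted: "sorted (map hd T) \<Longrightarrow> sorted (map hd (rins T a))"
proof (induction T)
  case Nil
  then show ?case by simp
next
  case (Cons c T)
  show ?case
  proof (cases "a < hd c")
    case True
    then show ?thesis using Cons.prems by auto
  next
    case False
    have "\<forall>y\<in>hd ` set (rins T a). hd c \<le> y" using rins_hds[of T a] Cons.prems False by auto
    then show ?thesis using Cons False by auto
  qed
qed

lemma fold_sorted: "sorted (map hd T) \<Longrightarrow> sorted (map hd (foldl rins T w))"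
  by (induction w arbitrary: T) (auto simp: rins_sorted)

lemma Rl_sorted: "sorted (map hd (Rl w))"
  unfolding Rl_def by (rule fold_sorted) simp

lemma rins_app_le: "\<forall>c\<in>set P. hd c \<le> a \<Longrightarrow> rins (P @ Q) a = P @ rins Q a"
  by (induction P) auto

lemma rins_app_gt: "\<exists>c\<in>set P. a < hd c \<Longrightarrow> rins (P @ Q) a = rins P a @ Q"
  by (induction P) auto

lemma foldW: "\<forall>c\<in>set P. \<forall>w\<in>set W. hd c \<le> w \<Longrightarrow> foldl rins (P @ Q) W = P @ foldl rins Q W"
proof (induction W arbitrary: Q)
  case Nil then show ?case by simp
next
  case (Cons w W)
  have "rins (P @ Q) w = P @ rins Q w" using Cons.prems by (intro rins_app_le) auto
  then show ?case using Cons by simp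
qed

lemma foldA: "sorted_wrt (>) A \<Longrightarrow> (A \<noteq> [] \<Longrightarrow> \<exists>c\<in>set P. hd A < hd c)
   \<Longrightarrow> foldl rins (P @ Q) A = foldl rins P A @ Q"
proof (induction A arbitrary: P)
  case Nil then show ?case by simp
next
  case (Cons a A)
  have 1: "rins (P @ Q) a = rins P a @ Q" using Cons.prems(2) by (intro rins_app_gt) auto
  have 2: "\<exists>c\<in>set (rins P a). hd A < hd c" if "A \<noteq> []"
  proof -
    have "hd A < a" using Cons.prems(1) that by (cases A) auto
    then show ?thesis using rins_hd_in[of a P] by force
  qed
  show ?case using 1 Cons.IH[of "rins P a"] Cons.prems(1) 2 by simp
qed

lemma fold_hds: "hd ` set (foldl rins P A) \<subseteq> hd ` set P \<union> set A"
proof (induction A arbitrary: P)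
  case Nil then show ?case by simp
next
  case (Cons a A)
  show ?case using Cons.IH[of "rins P a"] rins_hds[of P a] by auto
qed

lemma take_hd: "sorted (map hd T) \<Longrightarrow> z \<in> hd ` set T \<Longrightarrow> \<exists>c\<in>set (takeWhile (\<lambda>c. hd c \<le> z) T). hd c = z"
proof (induction T)
  case Nil then show ?case by simp
next
  case (Cons c T)
  show ?case
  proof (cases "hd c = z")
    case True then show ?thesis by simp
  next
    case False
    then have zT: "z \<in> hd ` set T" using Cons.prems(2) by auto
    have "hd c \<le> z" using Cons.prems zT by auto
    then show ?thesis using Cons zT by auto
  qed
qed

lemma split_sorted: "sorted_wrt (<) d \<Longrightarrow> d = filter (\<lambda>x. x < (z::nat)) d @ filter (\<lambda>x. z \<le> x) d"
proof (induction d)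
  case Nil then show ?case by simp
next
  case (Cons x d)
  show ?case
  proof (cases "x < z")
    case True then show ?thesis using Cons by auto
  next
    case False
    then have "filter (\<lambda>x. x < z) d = []" "filter (\<lambda>x. z \<le> x) d = d" using Cons.prems
      by (auto simp: filter_empty_conv intro!: filter_True)
    then show ?thesis using False by simp
  qed
qed

lemma commute:
  assumes T: "sorted (map hd T)" and c: "c \<noteq> []" and d: "sorted_wrt (<) d"
  shows "foldl rins T (rev c @ rev d)
       = foldl rins T (rev (filter (\<lambda>x. x < hd c) d @ c) @ rev (filter (\<lambda>x. hd c \<le> x) d))"
proof -
  define z where "z = hd c"
  define D1 where "D1 = filter (\<lambda>x. x < z) d"
  define D2 where "D2 = filter (\<lambda>x. z \<le> x) d"
  define A where "A = rev D1"
  define W where "W = rev D2"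
  have rd: "rev d = W @ A" unfolding A_def W_def D1_def D2_def
    using split_sorted[OF d, of z] by (metis rev_append)
  define T' where "T' = foldl rins T (rev c)"
  have rc: "rev c = rev (tl c) @ [z]" unfolding z_def using c by (cases c) auto
  have zT: "z \<in> hd ` set T'" unfolding T'_def rc by (simp add: rins_hd_in)
  have sT: "sorted (map hd T')" unfolding T'_def by (rule fold_sorted[OF T])
  define P where "P = takeWhile (\<lambda>c. hd c \<le> z) T'"
  define Q where "Q = dropWhile (\<lambda>c. hd c \<le> z) T'"
  have TPQ: "T' = P @ Q" unfolding P_def Q_def by simp
  have Pz: "\<forall>c\<in>set P. hd c \<le> z" unfolding P_def by (auto dest: set_takeWhileD)
  obtain cz where cz: "cz \<in> set P" "hd cz = z" using take_hd[OF sT zT] P_def by blast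
  have Az: "\<forall>a\<in>set A. a < z" unfolding A_def D1_def by auto
  have Wz: "\<forall>w\<in>set W. z \<le> w" unfolding W_def D2_def by auto
  have sA: "sorted_wrt (>) A" unfolding A_def D1_def sorted_wrt_rev
    using sorted_wrt_filter[OF d] by simp
  have hA: "A \<noteq> [] \<Longrightarrow> \<exists>c\<in>set P. hd A < hd c" using cz Az by (metis hd_in_set)
  have L: "foldl rins T' (W @ A) = foldl rins P A @ foldl rins Q W"
  proof -
    have "foldl rins (P @ Q) W = P @ foldl rins Q W" using Pz Wz by (intro foldW) force
    then show ?thesis using foldA[OF sA hA] TPQ by simp
  qed
  have R: "foldl rins T' (A @ W) = foldl rins P A @ foldl rins Q W"
  proof -
    have "\<forall>c\<in>set (foldl rins P A). \<forall>w\<in>set W. hd c \<le> w"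
    proof (intro ballI)
      fix c w assume "c \<in> set (foldl rins P A)" "w \<in> set W"
      then have "hd c \<in> hd ` set P \<union> set A" using fold_hds[of P A] by auto
      then show "hd c \<le> w" using Pz Az Wz \<open>w \<in> set W\<close> by fastforce
    qed
    then have "foldl rins (foldl rins P A @ Q) W = foldl rins P A @ foldl rins Q W" by (rule foldW)
    then show ?thesis using foldA[OF sA hA] TPQ by simp
  qed
  have "rev (filter (\<lambda>x. x < hd c) d @ c) @ rev (filter (\<lambda>x. hd c \<le> x) d) = rev c @ A @ W"
    unfolding A_def W_def D1_def D2_def z_def by simp
  then show ?thesis using L R rd unfolding T'_def by simp
qed

lemma app_col: "\<forall>col\<in>set T. hd col \<le> hd c \<Longrightarrow> c \<noteq> [] \<Longrightarrow> sorted_wrt (<) c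
  \<Longrightarrow> foldl rins T (rev c) = T @ [c]"
proof (induction c)
  case Nil then show ?case by simp
next
  case (Cons x c)
  show ?case
  proof (cases "c = []")
    case True
    then show ?thesis using rins_app_le[of T x "[]"] Cons.prems by simp
  next
    case False
    have xc: "x < hd c" using Cons.prems(3) False by (cases c) auto
    have a1: "\<forall>col\<in>set T. hd col \<le> hd c" using Cons.prems(1) xc by force
    have IH: "foldl rins T (rev c) = T @ [c]" using Cons.IH a1 False Cons.prems(3) by simp
    have "rins (T @ [c]) x = T @ rins [c] x" using Cons.prems(1) by (intro rins_app_le) auto
    then show ?thesis using IH xc by simp
  qed
qed

lemma read_Rl: "sorted (map hd T) \<Longrightarrow> \<forall>c\<in>set T. c \<noteq> [] \<and> sorted_wrt (<) c
   \<Longrightarrow> Rl (concat (map rev T)) = T"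
proof (induction T rule: rev_induct)
  case Nil then show ?case by (simp add: Rl_def)
next
  case (snoc c T)
  have IH: "Rl (concat (map rev T)) = T" using snoc by (simp add: sorted_append)
  have "\<forall>col\<in>set T. hd col \<le> hd c" using snoc.prems(1) by (simp add: sorted_append)
  then show ?case using IH app_col snoc.prems(2) by (simp add: Rl_def)
qed

definition cols :: "nat \<Rightarrow> nat list set" where
  "cols n = {c. c \<noteq> [] \<and> sorted_wrt (<) c \<and> set c \<subseteq> {1..n}}"

definition cenc :: "nat list \<Rightarrow> nat" where "cenc = to_nat"
definition cdec :: "nat \<Rightarrow> nat list" where "cdec = from_nat"

lemma cdec_cenc[simp]: "cdec (cenc c) = c" by (simp add: cenc_def cdec_def)

definition Bn :: "nat \<Rightarrow> nat set" where "Bn n = cenc ` cols n"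

definition rhs :: "nat list \<Rightarrow> nat list \<Rightarrow> nat list list" where
  "rhs c d = (filter (\<lambda>x. x < hd c) d @ c) #
     (if filter (\<lambda>x. hd c \<le> x) d = [] then [] else [filter (\<lambda>x. hd c \<le> x) d])"

definition Rn :: "nat \<Rightarrow> (nat list \<times> nat list) set" where
  "Rn n = {(map cenc [c, d], map cenc (rhs c d)) | c d. c \<in> cols n \<and> d \<in> cols n \<and> hd d < hd c}"

definition fcol :: "nat \<Rightarrow> nat list" where "fcol b = rev (cdec b)"
definition gcol :: "nat \<Rightarrow> nat list" where "gcol a = [cenc [a]]"

definition Nn :: "nat list \<Rightarrow> nat list" where "Nn w = map cenc (Rl (hext fcol w))"

definition sz :: "nat list \<Rightarrow> nat" where "sz w = sum_list (map (\<lambda>b. length (cdec b)) w)"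

fun wt :: "nat list \<Rightarrow> nat" where
  "wt [] = 0"
| "wt (b # w) = sz (b # w) + wt w"

lemma finite_cols: "finite (cols n)"
proof -
  have "cols n \<subseteq> {xs. set xs \<subseteq> {1..n} \<and> length xs \<le> n}"
  proof
    fix c assume "c \<in> cols n"
    then have c: "sorted_wrt (<) c" "set c \<subseteq> {1..n}" by (auto simp: cols_def)
    have "distinct c" using c(1) by (simp add: strict_sorted_iff)
    then have "length c = card (set c)" by (simp add: distinct_card)
    also have "\<dots> \<le> card {1..n}" using c(2) by (intro card_mono) auto
    finally show "c \<in> {xs. set xs \<subseteq> {1..n} \<and> length xs \<le> n}" using c(2) by simp
  qed
  then show ?thesis using finite_lists_length_le[of "{1..n}" n] finite_subset by auto
qed

lemma rhs_cols: assumes "c \<in> cols n" "d \<in> cols n" shows "set (rhs c d) \<subseteq> cols n"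
proof -
  have c: "c \<noteq> []" "sorted_wrt (<) c" "set c \<subseteq> {1..n}" and d: "sorted_wrt (<) d" "set d \<subseteq> {1..n}"
    using assms by (auto simp: cols_def)
  have hc: "\<forall>y\<in>set c. hd c \<le> y" using c(1,2) by (cases c) auto
  have 1: "filter (\<lambda>x. x < hd c) d @ c \<in> cols n"
    unfolding cols_def using c d hc by (auto simp: sorted_wrt_append sorted_wrt_filter intro: less_le_trans)
  have 2: "filter (\<lambda>x. hd c \<le> x) d \<in> cols n" if "filter (\<lambda>x. hd c \<le> x) d \<noteq> []"
    unfolding cols_def using that d by (auto simp: sorted_wrt_filter)
  show ?thesis unfolding rhs_def using 1 2 by auto
qed

lemma finite_Rn: "finite (Rn n)"
proof -
  have "Rn n \<subseteq> (\<lambda>(c, d). (map cenc [c, d], map cenc (rhs c d))) ` (cols n \<times> cols n)"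
    unfolding Rn_def by auto
  then show ?thesis using finite_cols by (meson finite_SigmaI finite_imageI finite_subset)
qed

lemma Rn_B: "(l, r) \<in> Rn n \<Longrightarrow> set l \<subseteq> Bn n \<and> set r \<subseteq> Bn n \<and> length l \<le> 2"
  unfolding Rn_def Bn_def using rhs_cols by fastforce

lemma hext_app[simp]: "hext f (u @ v) = hext f u @ hext f v"
  by (simp add: hext_def)

lemma Rl_app: "Rl (u @ v) = foldl rins (Rl u) v" by (simp add: Rl_def)

lemma rule_Rl:
  assumes "c \<in> cols n" "d \<in> cols n" "hd d < hd c"
  shows "Rl (X @ hext fcol (map cenc [c, d]) @ Y) = Rl (X @ hext fcol (map cenc (rhs c d)) @ Y)"
proof -
  have c: "c \<noteq> []" and d: "sorted_wrt (<) d" using assms by (auto simp: cols_def)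
  have l: "hext fcol (map cenc [c, d]) = rev c @ rev d" by (simp add: hext_def fcol_def)
  have r: "hext fcol (map cenc (rhs c d)) = rev (filter (\<lambda>x. x < hd c) d @ c) @ rev (filter (\<lambda>x. hd c \<le> x) d)"
    by (simp add: hext_def fcol_def rhs_def)
  show ?thesis unfolding l r Rl_app[of X] Rl_app[of "X @ _"] append_assoc[symmetric]
    using commute[OF Rl_sorted c d] by (simp add: Rl_app)
qed

lemma rstep_Rl: assumes "rstep (Rn n) x y" shows "Rl (hext fcol x) = Rl (hext fcol y)"
proof -
  obtain u v c d where x: "x = u @ map cenc [c, d] @ v" and y: "y = u @ map cenc (rhs c d) @ v"
    and cd: "c \<in> cols n" "d \<in> cols n" "hd d < hd c"
    using assms unfolding rstep_def Rn_def by blast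
  show ?thesis unfolding x y hext_app by (rule rule_Rl[OF cd])
qed

lemma sz_app[simp]: "sz (u @ v) = sz u + sz v" by (simp add: sz_def)

lemma wt_app: "wt (x @ v) = wt x + length x * sz v + wt v"
  by (induction x) (auto simp: sz_def)

lemma filter_len: "length (filter (\<lambda>x. x < (z::nat)) d) + length (filter (\<lambda>x. z \<le> x) d) = length d"
  by (induction d) auto

lemma rule_wt: assumes "c \<in> cols n" "d \<in> cols n" "hd d < hd c"
  shows "wt (map cenc (rhs c d)) < wt (map cenc [c, d]) \<and> sz (map cenc (rhs c d)) = sz (map cenc [c, d])
     \<and> length (rhs c d) \<le> 2"
proof -
  have d: "d \<noteq> []" using assms by (auto simp: cols_def)
  define F1 where "F1 = filter (\<lambda>x. x < hd c) d"
  define F2 where "F2 = filter (\<lambda>x. hd c \<le> x) d"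
  have len: "length F1 + length F2 = length d" unfolding F1_def F2_def by (rule filter_len)
  have "hd d \<in> set F1" unfolding F1_def using d assms(3) by auto
  then have "F1 \<noteq> []" by auto
  then have l2: "length F2 < length d" using len by (cases F1) auto
  show ?thesis
  proof (cases "F2 = []")
    case True
    then show ?thesis using len d unfolding rhs_def F1_def[symmetric] F2_def[symmetric]
      by (simp add: sz_def)
  next
    case False
    then show ?thesis using len l2 unfolding rhs_def F1_def[symmetric] F2_def[symmetric]
      by (simp add: sz_def)
  qed
qed

lemma wt_dec: assumes "rstep (Rn n) x y" shows "wt y < wt x"
proof -
  obtain u v c d where x: "x = u @ map cenc [c, d] @ v" and y: "y = u @ map cenc (rhs c d) @ v"
    and cd: "c \<in> cols n" "d \<in> cols n" "hd d < hd c"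
    using assms unfolding rstep_def Rn_def by blast
  note r = rule_wt[OF cd]
  have A1: "wt (map cenc (rhs c d)) < wt (map cenc [c, d])" using r by blast
  have L: "length (rhs c d) \<le> 2" using r by blast
  have A2: "length (map cenc (rhs c d)) * sz v \<le> 2 * sz v"
    unfolding length_map by (rule mult_right_mono[OF L]) simp
  have A3: "length (map cenc [c, d]) = 2" by simp
  have I: "wt (map cenc (rhs c d) @ v) < wt (map cenc [c, d] @ v)"
    unfolding wt_app A3 using A1 A2 by linarith
  have S: "sz (map cenc (rhs c d) @ v) = sz (map cenc [c, d] @ v)" unfolding sz_app using r by simp
  show ?thesis unfolding x y wt_app[of u] S using I by linarith
qed

lemma rstep_ctx: "rstep R x y \<Longrightarrow> rstep R (p @ x @ q) (p @ y @ q)"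
  unfolding rstep_def by (metis append.assoc)

lemma rtr_ctx: "(rstep R)\<^sup>*\<^sup>* x y \<Longrightarrow> (rstep R)\<^sup>*\<^sup>* (p @ x @ q) (p @ y @ q)"
  by (induction rule: rtranclp_induct) (auto intro: rtranclp.rtrancl_into_rtrancl rstep_ctx)

lemma rtr_cat: "(rstep R)\<^sup>*\<^sup>* x y \<Longrightarrow> (rstep R)\<^sup>*\<^sup>* x' y' \<Longrightarrow> (rstep R)\<^sup>*\<^sup>* (x @ x') (y @ y')"
proof -
  assume a: "(rstep R)\<^sup>*\<^sup>* x y" "(rstep R)\<^sup>*\<^sup>* x' y'"
  have "(rstep R)\<^sup>*\<^sup>* ([] @ x @ x') ([] @ y @ x')" by (rule rtr_ctx[OF a(1)])
  moreover have "(rstep R)\<^sup>*\<^sup>* (y @ x' @ []) (y @ y' @ [])" by (rule rtr_ctx[OF a(2)])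
  ultimately show ?thesis by simp
qed

lemma rule_step: "c \<in> cols n \<Longrightarrow> d \<in> cols n \<Longrightarrow> hd d < hd c
   \<Longrightarrow> rstep (Rn n) (map cenc [c, d]) (map cenc (rhs c d))"
  unfolding rstep_def Rn_def by (rule exI[of _ "[]"], rule exI[of _ "[]"]) auto

lemma sing_cols: "a \<in> {1..n} \<Longrightarrow> [a] \<in> cols n" by (simp add: cols_def)

lemma hd_le_all: "c \<noteq> [] \<Longrightarrow> sorted_wrt (<) c \<Longrightarrow> y \<in> set c \<Longrightarrow> hd c \<le> (y::nat)"
  by (cases c) auto

lemma lemQ: "cs \<noteq> [] \<Longrightarrow> \<forall>c\<in>set cs. c \<in> cols n \<Longrightarrow> sorted (map hd cs) \<Longrightarrow> a < hd (hd cs)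
  \<Longrightarrow> a \<in> {1..n} \<Longrightarrow> (rstep (Rn n))\<^sup>*\<^sup>* (map cenc cs @ [cenc [a]]) (cenc (a # hd cs) # map cenc (tl cs))"
proof (induction cs)
  case Nil then show ?case by simp
next
  case (Cons c cs)
  have cc: "c \<in> cols n" using Cons.prems by simp
  show ?case
  proof (cases cs)
    case Nil
    have "rstep (Rn n) (map cenc [c, [a]]) (map cenc (rhs c [a]))"
      by (rule rule_step[OF cc sing_cols[OF Cons.prems(5)]]) (use Cons.prems in simp)
    moreover have "rhs c [a] = [a # c]" using Cons.prems(4) by (simp add: rhs_def)
    ultimately show ?thesis using Nil by simp
  next
    case (Cons c2 cs')
    note cs = this
    have c2: "c2 \<in> cols n" using Cons.prems cs by simp
    have hc: "hd c \<le> hd c2" using Cons.prems(3) cs by simp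
    have IH: "(rstep (Rn n))\<^sup>*\<^sup>* (map cenc cs @ [cenc [a]]) (cenc (a # c2) # map cenc cs')"
      using Cons.IH Cons.prems cs hc by simp
    have ac2: "a # c2 \<in> cols n" using c2 Cons.prems(4,5) hc
      by (auto simp: cols_def dest: hd_le_all[of c2])
    have st: "rstep (Rn n) (map cenc [c, a # c2]) (map cenc (rhs c (a # c2)))"
      by (rule rule_step[OF cc ac2]) (use Cons.prems in simp)
    have c2ge: "\<forall>y\<in>set c2. hd c \<le> y" using hc c2 hd_le_all[of c2] by (force simp: cols_def)
    have f1: "filter (\<lambda>x. x < hd c) c2 = []" using c2ge by (auto simp: filter_empty_conv)
    have f2: "filter (\<lambda>x. hd c \<le> x) c2 = c2" using c2ge by (auto intro: filter_True)
    have "rhs c (a # c2) = [a # c, c2]" using Cons.prems(4) f1 f2 c2 by (auto simp: rhs_def cols_def)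
    then have st': "rstep (Rn n) [cenc c, cenc (a # c2)] [cenc (a # c), cenc c2]" using st by simp
    have "(rstep (Rn n))\<^sup>*\<^sup>* ([cenc c] @ (map cenc cs @ [cenc [a]]) @ []) ([cenc c] @ (cenc (a # c2) # map cenc cs') @ [])"
      by (rule rtr_ctx[OF IH])
    moreover have "rstep (Rn n) ([] @ [cenc c, cenc (a # c2)] @ map cenc cs') ([] @ [cenc (a # c), cenc c2] @ map cenc cs')"
      by (rule rstep_ctx[OF st'])
    ultimately show ?thesis using cs by (auto intro: rtranclp.rtrancl_into_rtrancl)
  qed
qed

lemma rins_cols: "\<forall>c\<in>set T. c \<in> cols n \<Longrightarrow> a \<in> {1..n} \<Longrightarrow> \<forall>c\<in>set (rins T a). c \<in> cols n"
proof (induction T)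
  case Nil then show ?case by (simp add: cols_def)
next
  case (Cons c T)
  have "a # c \<in> cols n" if "a < hd c"
    using Cons.prems that hd_le_all[of c] by (force simp: cols_def)
  then show ?case using Cons by auto
qed

lemma Rl_cols: "set u \<subseteq> {1..n} \<Longrightarrow> \<forall>c\<in>set (Rl u). c \<in> cols n"
proof (induction u rule: rev_induct)
  case Nil then show ?case by (simp add: Rl_def)
next
  case (snoc a u)
  then show ?case using rins_cols[of "Rl u" n a] by (simp add: Rl_app)
qed

lemma snoc_red: "\<forall>c\<in>set T. c \<in> cols n \<Longrightarrow> sorted (map hd T) \<Longrightarrow> a \<in> {1..n}
   \<Longrightarrow> (rstep (Rn n))\<^sup>*\<^sup>* (map cenc T @ [cenc [a]]) (map cenc (rins T a))"
proof (induction T)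
  case Nil then show ?case by simp
next
  case (Cons c T)
  show ?case
  proof (cases "a < hd c")
    case True
    have "(rstep (Rn n))\<^sup>*\<^sup>* (map cenc (c # T) @ [cenc [a]]) (cenc (a # hd (c # T)) # map cenc (tl (c # T)))"
      by (rule lemQ) (use Cons.prems True in auto)
    then show ?thesis using True by simp
  next
    case False
    have IH: "(rstep (Rn n))\<^sup>*\<^sup>* (map cenc T @ [cenc [a]]) (map cenc (rins T a))"
      using Cons by simp
    have "(rstep (Rn n))\<^sup>*\<^sup>* ([cenc c] @ (map cenc T @ [cenc [a]]) @ []) ([cenc c] @ map cenc (rins T a) @ [])"
      by (rule rtr_ctx[OF IH])
    then show ?thesis using False by simp
  qed
qed

lemma hext_gcol: "hext gcol u = map (\<lambda>a. cenc [a]) u"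
  by (induction u) (auto simp: hext_def gcol_def)

lemma word_red: "set u \<subseteq> {1..n} \<Longrightarrow> (rstep (Rn n))\<^sup>*\<^sup>* (hext gcol u) (map cenc (Rl u))"
proof (induction u rule: rev_induct)
  case Nil then show ?case by (simp add: Rl_def hext_def)
next
  case (snoc a u)
  have 1: "(rstep (Rn n))\<^sup>*\<^sup>* (hext gcol u @ [cenc [a]]) (map cenc (Rl u) @ [cenc [a]])"
    using rtr_cat[OF snoc.IH] snoc.prems by simp
  have 2: "(rstep (Rn n))\<^sup>*\<^sup>* (map cenc (Rl u) @ [cenc [a]]) (map cenc (rins (Rl u) a))"
    by (rule snoc_red) (use Rl_cols[of u n] snoc.prems Rl_sorted in auto)
  show ?case using rtranclp_trans[OF 1 2] by (simp add: hext_gcol Rl_app)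
qed

lemma col_red: "c \<in> cols n \<Longrightarrow> (rstep (Rn n))\<^sup>*\<^sup>* (hext gcol (rev c)) [cenc c]"
proof (induction c)
  case Nil then show ?case by (simp add: cols_def)
next
  case (Cons x c)
  show ?case
  proof (cases "c = []")
    case True then show ?thesis by (simp add: hext_gcol)
  next
    case False
    have cc: "c \<in> cols n" using Cons.prems False by (simp add: cols_def)
    have xc: "x < hd c" using Cons.prems False by (cases c) (auto simp: cols_def)
    have x: "x \<in> {1..n}" using Cons.prems by (auto simp: cols_def)
    have 1: "(rstep (Rn n))\<^sup>*\<^sup>* (hext gcol (rev c) @ [cenc [x]]) ([cenc c] @ [cenc [x]])"
      using rtr_cat[OF Cons.IH[OF cc]] by simp
    have st: "rstep (Rn n) (map cenc [c, [x]]) (map cenc (rhs c [x]))"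
      by (rule rule_step[OF cc sing_cols[OF x]]) (use xc in simp)
    have "rhs c [x] = [x # c]" using xc by (simp add: rhs_def)
    then have "rstep (Rn n) [cenc c, cenc [x]] [cenc (x # c)]" using st by simp
    then show ?thesis using 1 by (simp add: hext_gcol)
  qed
qed

lemma irr_sorted: "set x \<subseteq> Bn n \<Longrightarrow> \<forall>y. \<not> rstep (Rn n) x y \<Longrightarrow> sorted (map (\<lambda>b. hd (cdec b)) x)"
proof (induction x)
  case Nil then show ?case by simp
next
  case (Cons a x)
  have irr: "\<forall>y. \<not> rstep (Rn n) x y"
  proof (intro allI notI)
    fix y assume "rstep (Rn n) x y"
    then have "rstep (Rn n) ([a] @ x @ []) ([a] @ y @ [])" by (rule rstep_ctx)
    then show False using Cons.prems(2) by simp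
  qed
  have sx: "sorted (map (\<lambda>b. hd (cdec b)) x)" using Cons.IH Cons.prems(1) irr by simp
  show ?case
  proof (cases x)
    case Nil then show ?thesis by simp
  next
    case (Cons b x')
    obtain c where c: "c \<in> cols n" "a = cenc c" using Cons.prems(1) by (auto simp: Bn_def)
    obtain d where d: "d \<in> cols n" "b = cenc d" using Cons.prems(1) \<open>x = b # x'\<close> by (auto simp: Bn_def)
    have "\<not> hd d < hd c"
    proof
      assume "hd d < hd c"
      then have "rstep (Rn n) ([] @ map cenc [c, d] @ x') ([] @ map cenc (rhs c d) @ x')"
        by (intro rstep_ctx rule_step c d)
      then show False using Cons.prems(2) \<open>x = b # x'\<close> c d by simp
    qed
    then show ?thesis using sx \<open>x = b # x'\<close> c d by (simp add: not_less, meson order.trans)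
  qed
qed

lemma N_irr: assumes B: "set x \<subseteq> Bn n" and irr: "\<forall>y. \<not> rstep (Rn n) x y" shows "Nn x = x"
proof -
  define T where "T = map cdec x"
  have cT: "\<forall>c\<in>set T. c \<in> cols n" using B unfolding T_def by (auto simp: Bn_def)
  have sT: "sorted (map hd T)" using irr_sorted[OF B irr] unfolding T_def by (simp add: comp_def)
  have "Rl (concat (map rev T)) = T" by (rule read_Rl[OF sT]) (use cT in \<open>auto simp: cols_def\<close>)
  moreover have "hext fcol x = concat (map rev T)" unfolding T_def hext_def fcol_def[abs_def] by (simp add: comp_def)
  moreover have "map cenc (map cdec x) = x"
  proof -
    have "\<forall>b\<in>set x. cenc (cdec b) = b" using B by (auto simp: Bn_def)
    then show ?thesis by (induction x) auto
  qed
  ultimately show ?thesis unfolding Nn_def T_def by simp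
qed

lemma finite_Bn: "finite (Bn n)" unfolding Bn_def using finite_cols by simp

lemma sq_loc: "squier (Rn n) (Bn n) 2 wt Nn"
proof
  show "finite (Rn n)" by (rule finite_Rn)
  show "finite (Bn n)" by (rule finite_Bn)
  show "\<And>l r. (l, r) \<in> Rn n \<Longrightarrow> set l \<subseteq> Bn n \<and> set r \<subseteq> Bn n \<and> length l \<le> 2" by (rule Rn_B)
  show "\<And>x y. rstep (Rn n) x y \<Longrightarrow> wt y < wt x" by (rule wt_dec)
  show "\<And>x y. rstep (Rn n) x y \<Longrightarrow> set x \<subseteq> Bn n \<Longrightarrow> Nn x = Nn y"
    unfolding Nn_def using rstep_Rl by metis
  show "\<And>x. set x \<subseteq> Bn n \<Longrightarrow> \<forall>y. \<not> rstep (Rn n) x y \<Longrightarrow> Nn x = x" by (rule N_irr)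
qed

lemma rtr_thue: "(rstep R)\<^sup>*\<^sup>* x y \<Longrightarrow> thue R x y"
  unfolding thue_def by (induction rule: rtranclp_induct) (auto intro: rtranclp.rtrancl_into_rtrancl)

lemma thue_sym: "thue R x y \<Longrightarrow> thue R y x"
  unfolding thue_def
  by (induction rule: rtranclp_induct) (auto intro: converse_rtranclp_into_rtranclp)

lemma thue_trans: "thue R x y \<Longrightarrow> thue R y z \<Longrightarrow> thue R x z"
  unfolding thue_def by (rule rtranclp_trans)

lemma thue_Rl: "thue (Rn n) u v \<Longrightarrow> Rl (hext fcol u) = Rl (hext fcol v)"
  unfolding thue_def by (induction rule: rtranclp_induct) (auto dest: rstep_Rl)

lemma hext_fg: "hext fcol (hext gcol w) = w"
  by (induction w) (auto simp: hext_def fcol_def gcol_def)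

lemma gf_red: "set w \<subseteq> Bn n \<Longrightarrow> (rstep (Rn n))\<^sup>*\<^sup>* (hext gcol (hext fcol w)) w"
proof (induction w)
  case Nil then show ?case by (simp add: hext_def)
next
  case (Cons b w)
  obtain c where c: "c \<in> cols n" "b = cenc c" using Cons.prems by (auto simp: Bn_def)
  have 1: "(rstep (Rn n))\<^sup>*\<^sup>* (hext gcol (rev c)) [b]" using col_red[OF c(1)] c(2) by simp
  have "hext gcol (hext fcol (b # w)) = hext gcol (rev c) @ hext gcol (hext fcol w)"
    using c by (simp add: hext_def fcol_def)
  then show ?case using rtr_cat[OF 1 Cons.IH] Cons.prems by simp
qed

theorem corollary5p7:
  fixes n :: nat
  shows "FDT {1..n} (lps_cong n)"
proof -
  obtain X where X: "finite X" "homotopy_base (Bn n) (Rn n) X" using squier.squier_main[OF sq_loc] by blast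
  have p1: "\<forall>b\<in>Bn n. set (fcol b) \<subseteq> {1..n}" by (auto simp: Bn_def fcol_def cols_def)
  have p2: "\<forall>a\<in>{1..n}. set (gcol a) \<subseteq> Bn n"
  proof
    fix a :: nat assume "a \<in> {1..n}"
    then have "[a] \<in> cols n" by (rule sing_cols)
    then show "set (gcol a) \<subseteq> Bn n" by (auto simp: Bn_def gcol_def)
  qed
  have p3: "\<forall>u v. set u \<subseteq> Bn n \<longrightarrow> set v \<subseteq> Bn n \<longrightarrow> thue (Rn n) u v \<longrightarrow> lps_cong n (hext fcol u) (hext fcol v)"
    unfolding lps_cong_def using thue_Rl by blast
  have p4: "\<forall>u v. set u \<subseteq> {1..n} \<longrightarrow> set v \<subseteq> {1..n} \<longrightarrow> lps_cong n u v \<longrightarrow> thue (Rn n) (hext gcol u) (hext gcol v)"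
  proof (intro allI impI)
    fix u v assume u: "set u \<subseteq> {1..n}" and v: "set v \<subseteq> {1..n}" and e: "lps_cong n u v"
    have 1: "thue (Rn n) (hext gcol u) (map cenc (Rl u))" by (rule rtr_thue[OF word_red[OF u]])
    have 2: "thue (Rn n) (hext gcol v) (map cenc (Rl v))" by (rule rtr_thue[OF word_red[OF v]])
    have 3: "thue (Rn n) (hext gcol u) (map cenc (Rl v))" using 1 e by (simp add: lps_cong_def)
    show "thue (Rn n) (hext gcol u) (hext gcol v)" by (rule thue_trans[OF 3 thue_sym[OF 2]])
  qed
  have p5: "\<forall>w. set w \<subseteq> {1..n} \<longrightarrow> lps_cong n (hext fcol (hext gcol w)) w"
    by (simp add: hext_fg lps_cong_def)
  have p6: "\<forall>w. set w \<subseteq> Bn n \<longrightarrow> thue (Rn n) (hext gcol (hext fcol w)) w"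
    using rtr_thue[OF gf_red] by blast
  have pres: "presents (Bn n) (Rn n) {1..n} (lps_cong n)"
    unfolding presents_def by (rule exI[of _ fcol], rule exI[of _ gcol], intro conjI p1 p2 p3 p4 p5 p6)
  have rb: "\<forall>(l, r)\<in>Rn n. set l \<subseteq> Bn n \<and> set r \<subseteq> Bn n" using Rn_B by blast
  show ?thesis unfolding FDT_def
    by (rule exI[of _ "Bn n"], rule exI[of _ "Rn n"], rule exI[of _ X],
        intro conjI finite_Bn finite_Rn rb pres X)
qed

end
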